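(* Let $\bm X\in\mathbb{R}_+^{m\times n}$, let $(\bm W^k,\bm H^k)\in\mathbb{R}_{++}^{m\times r}\times\mathbb{R}_{++}^{r\times n}$, and let $\phi$ and $\hat f_k$ be as defined below. Then for any $L_k>0$ with $$L_k\ge\max\Big\{\max_{i\in[m],l\in[r]}\sum_{j=1}^n\alpha^k_{ilj}X_{ij},\ \max_{l\in[r],j\in[n]}\sum_{i=1}^m\alpha^k_{ilj}X_{ij},\ m,\ n\Big\},$$ both $L_k\phi-\hat f_k$ and $L_k\phi+\hat f_k$ are convex on $\mathbb{R}_{++}^{m\times r}\times\mathbb{R}_{++}^{r\times n}$, i.e. $(\hat f_k,\phi)$ is $L_k$-smad there. Consequently, for every $L\ge\max\{\max_i\sum_jX_{ij},\ \max_j\sum_iX_{ij},\ m,\ n\}$, the pair $(\hat f_k,\phi)$ is $L$-smad on $\mathbb{R}_{++}^{m\times r}\times\mathbb{R}_{++}^{r\times n}$ for every $k$ and every choice of $(\bm W^k,\bm H^k)$.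
   Context: $[n]=\{1,\dots,n\}$. Kernel: $\phi(\bm W,\bm H)=\sum_{i=1}^m\sum_{l=1}^r\big(-\log W_{il}+\tfrac12W_{il}^2\big)+\sum_{l=1}^r\sum_{j=1}^n\big(-\log H_{lj}+\tfrac12H_{lj}^2\big)$, with domain $\mathbb{R}_{++}^{m\times r}\times\mathbb{R}_{++}^{r\times n}$. Given $(\bm W^k,\bm H^k)$ with positive entries, $\alpha^k_{ilj}=\frac{W^k_{il}H^k_{lj}}{\sum_{l'=1}^rW^k_{il'}H^k_{l'j}}$ and $\hat f_k(\bm W,\bm H)=\sum_{i,j}\Big(X_{ij}\log X_{ij}-X_{ij}\sum_{l=1}^r\alpha^k_{ilj}\log\frac{W_{il}H_{lj}}{\alpha^k_{ilj}}-X_{ij}+(\bm W\bm H)_{ij}\Big)$ (convention $0\log0=0$). A pair $(h,\phi)$ is $L$-smad on an open convex set $C$ if $L\phi-h$ and $L\phi+h$ are convex on $C$. *)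

theory Defs
  imports "HOL-Analysis.Analysis"
begin

text \<open>Matrices are represented as real^'c^'r (rows indexed by 'r, columns by 'c).
  Dimensions: m = CARD('m), r = CARD('r), n = CARD('n).\<close>

definition xlogx :: "real \<Rightarrow> real" where
  "xlogx x = (if x = 0 then 0 else x * ln x)"

definition pos_domain :: "((real^'r^'m) \<times> (real^'n^'r)) set" where
  "pos_domain = {(W, H). (\<forall>i l. 0 < W $ i $ l) \<and> (\<forall>l j. 0 < H $ l $ j)}"

definition kernel_phi :: "(real^'r^'m) \<times> (real^'n^'r) \<Rightarrow> real" where
  "kernel_phi WH = (case WH of (W, H) \<Rightarrow>
      (\<Sum>i\<in>UNIV. \<Sum>l\<in>UNIV. - ln (W $ i $ l) + (W $ i $ l)^2 / 2)
    + (\<Sum>l\<in>UNIV. \<Sum>j\<in>UNIV. - ln (H $ l $ j) + (H $ l $ j)^2 / 2))"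

definition alpha :: "real^'r^'m \<Rightarrow> real^'n^'r \<Rightarrow> 'm \<Rightarrow> 'r \<Rightarrow> 'n \<Rightarrow> real" where
  "alpha Wk Hk i l j = Wk $ i $ l * Hk $ l $ j / (\<Sum>l'\<in>UNIV. Wk $ i $ l' * Hk $ l' $ j)"

definition fhat :: "real^'n^'m \<Rightarrow> real^'r^'m \<Rightarrow> real^'n^'r
                    \<Rightarrow> (real^'r^'m) \<times> (real^'n^'r) \<Rightarrow> real" where
  "fhat X Wk Hk WH = (case WH of (W, H) \<Rightarrow>
      (\<Sum>i\<in>UNIV. \<Sum>j\<in>UNIV.
          xlogx (X $ i $ j)
        - X $ i $ j * (\<Sum>l\<in>UNIV. alpha Wk Hk i l j *
                         ln (W $ i $ l * H $ l $ j / alpha Wk Hk i l j))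
        - X $ i $ j + (W ** H) $ i $ j))"

definition smad :: "real \<Rightarrow> ('a::real_vector \<Rightarrow> real) \<Rightarrow> ('a \<Rightarrow> real) \<Rightarrow> 'a set \<Rightarrow> bool" where
  "smad L h \<phi> C \<longleftrightarrow> convex_on C (\<lambda>x. L * \<phi> x - h x) \<and> convex_on C (\<lambda>x. L * \<phi> x + h x)"

end

theory Submission
  imports Defs
begin

lemma convex_on_sum_fun:
  assumes "finite I" "convex S" "\<And>i. i \<in> I \<Longrightarrow> convex_on S (f i)"
  shows "convex_on S (\<lambda>x. \<Sum>i\<in>I. f i x)"
  using assms(1,3)
proof (induction I rule: finite_induct)
  case empty then show ?case using assms(2) by (simp add: convex_on_const)
next
  case (insert a F) then show ?case by (simp add: convex_on_add)
qed

lemma convex_on_cong_on: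
  assumes "convex_on S f" "\<And>x. x \<in> S \<Longrightarrow> f x = g x"
  shows "convex_on S g"
  using assms unfolding convex_on_def convex_def by (metis)

lemma convex_on_comp_lin:
  assumes "convex_on T g" "convex S" "\<And>x. x \<in> S \<Longrightarrow> l x \<in> T"
    "\<And>x y u v. l (u *\<^sub>R x + v *\<^sub>R y) = u * l x + v * l y"
  shows "convex_on S (\<lambda>x. g (l x))"
proof -
  have "g (l (u *\<^sub>R x + v *\<^sub>R y)) \<le> u * g (l x) + v * g (l y)"
    if "x \<in> S" "y \<in> S" "0 \<le> u" "0 \<le> v" "u + v = 1" for x y u v
  proof -
    have "g (l (u *\<^sub>R x + v *\<^sub>R y)) = g (u *\<^sub>R l x + v *\<^sub>R l y)"
      using assms(4) by simp
    also have "\<dots> \<le> u * g (l x) + v * g (l y)"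
      using assms(1) assms(3) that unfolding convex_on_def by blast
    finally show ?thesis .
  qed
  then show ?thesis using assms(2) unfolding convex_on_def by blast
qed

lemma convex_pos_domain: "convex (pos_domain :: ((real^'r^'m) \<times> (real^'n^'r)) set)"
  unfolding convex_def pos_domain_def
  by (auto intro!: add_pos_nonneg add_nonneg_pos simp: le_less)

lemma convex_neg_ln: "convex_on {0<..} (\<lambda>x :: real. -ln x)"
    by (rule convex_on_realI[where f' = "\<lambda>x. -1/x"])
       (auto intro!: derivative_eq_intros simp: field_simps)

lemma convex_g1:
  fixes c d :: real assumes "0 \<le> c" "0 \<le> d"
  shows "convex_on {0<..} (\<lambda>t. - c * ln t + d * t^2)"
proof -
  have "convex_on {0<..} (\<lambda>t. c * (- ln t) + d * t^2)"
    apply (intro convex_on_add convex_on_cmul assms convex_neg_ln)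
    using convex_on_subset[OF convex_power2] by auto
  then show ?thesis by simp
qed

lemma alpha_pos:
  assumes "(Wk, Hk) \<in> pos_domain"
  shows "0 < alpha Wk Hk i l j"
proof -
  have "0 < (\<Sum>l'\<in>UNIV. Wk $ i $ l' * Hk $ l' $ j)"
    using assms by (intro sum_pos) (auto simp: pos_domain_def)
  then show ?thesis using assms by (auto simp: alpha_def pos_domain_def)
qed

lemma fhat_expand:
  fixes X :: "real^'n^'m" and Wk :: "real^'r^'m" and Hk :: "real^'n^'r"
  assumes pk: "(Wk, Hk) \<in> pos_domain" and p: "(W, H) \<in> pos_domain"
  shows "fhat X Wk Hk (W, H) =
     (\<Sum>i\<in>UNIV. \<Sum>j\<in>UNIV. xlogx (X $ i $ j) + X $ i $ j * (\<Sum>l\<in>UNIV. alpha Wk Hk i l j * ln (alpha Wk Hk i l j)) - X $ i $ j)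
   - (\<Sum>i\<in>UNIV. \<Sum>l\<in>UNIV. (\<Sum>j\<in>UNIV. alpha Wk Hk i l j * X $ i $ j) * ln (W $ i $ l))
   - (\<Sum>l\<in>UNIV. \<Sum>j\<in>UNIV. (\<Sum>i\<in>UNIV. alpha Wk Hk i l j * X $ i $ j) * ln (H $ l $ j))
   + (\<Sum>i\<in>UNIV. \<Sum>l\<in>UNIV. \<Sum>j\<in>UNIV. W $ i $ l * H $ l $ j)"
proof -
  let ?a = "alpha Wk Hk"
  have lnsplit: "ln (W $ i $ l * H $ l $ j / ?a i l j) = ln (W $ i $ l) + ln (H $ l $ j) - ln (?a i l j)" for i l j
  proof -
    have "0 < W $ i $ l" "0 < H $ l $ j" using p by (auto simp: pos_domain_def)
    then show ?thesis using alpha_pos[OF pk, of i l j] by (simp add: ln_div ln_mult)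
  qed
  have trm: "xlogx (X $ i $ j)
        - X $ i $ j * (\<Sum>l\<in>UNIV. ?a i l j * ln (W $ i $ l * H $ l $ j / ?a i l j))
        - X $ i $ j + (W ** H) $ i $ j
      = (xlogx (X $ i $ j) + X $ i $ j * (\<Sum>l\<in>UNIV. ?a i l j * ln (?a i l j)) - X $ i $ j)
        - (\<Sum>l\<in>UNIV. ?a i l j * X $ i $ j * ln (W $ i $ l))
        - (\<Sum>l\<in>UNIV. ?a i l j * X $ i $ j * ln (H $ l $ j))
        + (\<Sum>l\<in>UNIV. W $ i $ l * H $ l $ j)" for i j
    unfolding lnsplit by (simp add: matrix_matrix_mult_def algebra_simps sum.distrib sum_subtractf sum_distrib_left)
  have s1: "(\<Sum>i\<in>UNIV. \<Sum>j\<in>UNIV. \<Sum>l\<in>UNIV. ?a i l j * X $ i $ j * ln (W $ i $ l))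
      = (\<Sum>i\<in>UNIV. \<Sum>l\<in>UNIV. (\<Sum>j\<in>UNIV. ?a i l j * X $ i $ j) * ln (W $ i $ l))"
    by (subst sum.swap) (simp add: sum_distrib_right)
  have s2: "(\<Sum>i\<in>UNIV. \<Sum>j\<in>UNIV. \<Sum>l\<in>UNIV. ?a i l j * X $ i $ j * ln (H $ l $ j))
      = (\<Sum>l\<in>UNIV. \<Sum>j\<in>UNIV. (\<Sum>i\<in>UNIV. ?a i l j * X $ i $ j) * ln (H $ l $ j))"
  proof -
    have "(\<Sum>i\<in>UNIV. \<Sum>j\<in>UNIV. \<Sum>l\<in>UNIV. ?a i l j * X $ i $ j * ln (H $ l $ j))
       = (\<Sum>i\<in>UNIV. \<Sum>l\<in>UNIV. \<Sum>j\<in>UNIV. ?a i l j * X $ i $ j * ln (H $ l $ j))"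
      by (subst sum.swap) simp
    also have "\<dots> = (\<Sum>l\<in>UNIV. \<Sum>i\<in>UNIV. \<Sum>j\<in>UNIV. ?a i l j * X $ i $ j * ln (H $ l $ j))"
      by (rule sum.swap)
    also have "\<dots> = (\<Sum>l\<in>UNIV. \<Sum>j\<in>UNIV. \<Sum>i\<in>UNIV. ?a i l j * X $ i $ j * ln (H $ l $ j))"
      by (subst sum.swap) simp
    finally show ?thesis by (simp add: sum_distrib_right)
  qed
  have s3: "(\<Sum>i\<in>UNIV. \<Sum>j\<in>UNIV. \<Sum>l\<in>UNIV. W $ i $ l * H $ l $ j)
      = (\<Sum>i\<in>UNIV. \<Sum>l\<in>UNIV. \<Sum>j\<in>UNIV. W $ i $ l * H $ l $ j)"
    by (subst sum.swap) simp
  show ?thesis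
  proof -
    have "fhat X Wk Hk (W, H) = (\<Sum>i\<in>UNIV. \<Sum>j\<in>UNIV. (xlogx (X $ i $ j) + X $ i $ j * (\<Sum>l\<in>UNIV. ?a i l j * ln (?a i l j)) - X $ i $ j)
        - (\<Sum>l\<in>UNIV. ?a i l j * X $ i $ j * ln (W $ i $ l))
        - (\<Sum>l\<in>UNIV. ?a i l j * X $ i $ j * ln (H $ l $ j))
        + (\<Sum>l\<in>UNIV. W $ i $ l * H $ l $ j))"
      unfolding fhat_def prod.case by (rule sum.cong[OF refl], rule sum.cong[OF refl], rule trm)
    then show ?thesis
      unfolding sum.distrib sum_subtractf s1 s2 s3 by simp
  qed
qed


lemma sq_sum:
  fixes W :: "real^'r^'m" and H :: "real^'n^'r" and s :: real
  assumes "s = 1 \<or> s = -1"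
  shows "(\<Sum>i\<in>UNIV. \<Sum>l\<in>UNIV. \<Sum>j\<in>UNIV. (W $ i $ l + s * H $ l $ j)^2 / 2)
    = (\<Sum>i\<in>UNIV. \<Sum>l\<in>UNIV. real CARD('n) * (W $ i $ l)^2 / 2)
      + s * (\<Sum>i\<in>UNIV. \<Sum>l\<in>UNIV. \<Sum>j\<in>UNIV. W $ i $ l * H $ l $ j)
      + (\<Sum>l\<in>UNIV. \<Sum>j\<in>UNIV. real CARD('m) * (H $ l $ j)^2 / 2)"
proof -
  have ss: "s^2 = 1" using assms by auto
  have e: "(W $ i $ l + s * H $ l $ j)^2 / 2 = (W $ i $ l)^2 / 2 + s * (W $ i $ l * H $ l $ j) + (H $ l $ j)^2/2" for i l j
    using ss by (simp add: power2_eq_square algebra_simps)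
  have h: "(\<Sum>i\<in>(UNIV::'m set). \<Sum>l\<in>UNIV. \<Sum>j\<in>UNIV. (H $ l $ j)^2/2::real) = (\<Sum>l\<in>UNIV. \<Sum>j\<in>UNIV. real CARD('m) * (H $ l $ j)^2 / 2)"
  proof -
    have "(\<Sum>i\<in>(UNIV::'m set). \<Sum>l\<in>UNIV. \<Sum>j\<in>UNIV. (H $ l $ j)^2/2::real) = (\<Sum>l\<in>UNIV. \<Sum>i\<in>(UNIV::'m set). \<Sum>j\<in>UNIV. (H $ l $ j)^2/2)"
      by (rule sum.swap)
    also have "\<dots> = (\<Sum>l\<in>UNIV. \<Sum>j\<in>UNIV. \<Sum>i\<in>(UNIV::'m set). (H $ l $ j)^2/2)"
      by (subst sum.swap) simp
    finally show ?thesis by simp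
  qed
  show ?thesis
    unfolding e sum.distrib h by (simp add: sum_distrib_left)
qed

lemma main_convex:
  fixes X :: "real^'n^'m" and Wk :: "real^'r^'m" and Hk :: "real^'n^'r" and L s :: real
  assumes pk: "(Wk, Hk) \<in> pos_domain" and Xn: "\<forall>i j. 0 \<le> X $ i $ j"
    and s: "s = 1 \<or> s = -1"
    and La: "\<And>i l. (\<Sum>j\<in>UNIV. alpha Wk Hk i l j * X $ i $ j) \<le> L"
    and Lb: "\<And>l j. (\<Sum>i\<in>UNIV. alpha Wk Hk i l j * X $ i $ j) \<le> L"
    and Lm: "real CARD('m) \<le> L" and Ln: "real CARD('n) \<le> L"
  shows "convex_on pos_domain (\<lambda>x. L * kernel_phi x + s * fhat X Wk Hk x)"
proof -
  define a where "a i l = (\<Sum>j\<in>UNIV. alpha Wk Hk i l j * X $ i $ j)" for i l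
  define b where "b l j = (\<Sum>i\<in>UNIV. alpha Wk Hk i l j * X $ i $ j)" for l j
  define A where "A = (\<Sum>i\<in>UNIV. \<Sum>j\<in>UNIV. xlogx (X $ i $ j) + X $ i $ j * (\<Sum>l\<in>UNIV. alpha Wk Hk i l j * ln (alpha Wk Hk i l j)) - X $ i $ j)"
  define m where "m = real CARD('m)"
  define n where "n = real CARD('n)"
  have a0: "0 \<le> a i l" for i l unfolding a_def using alpha_pos[OF pk] Xn
    by (intro sum_nonneg) (simp add: less_imp_le)
  have b0: "0 \<le> b l j" for l j unfolding b_def using alpha_pos[OF pk] Xn
    by (intro sum_nonneg) (simp add: less_imp_le)
  have ca: "0 \<le> L + s * a i l" for i l using s a0[of i l] La[of i l] unfolding a_def by auto
  have cb: "0 \<le> L + s * b l j" for l j using s b0[of l j] Lb[of l j] unfolding b_def by auto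
  define G where "G p = s * A
     + (\<Sum>i\<in>UNIV. \<Sum>l\<in>UNIV. - (L + s * a i l) * ln (fst p $ i $ l) + ((L - n) / 2) * (fst p $ i $ l)^2)
     + (\<Sum>l\<in>UNIV. \<Sum>j\<in>UNIV. - (L + s * b l j) * ln (snd p $ l $ j) + ((L - m) / 2) * (snd p $ l $ j)^2)
     + (\<Sum>i\<in>UNIV. \<Sum>l\<in>UNIV. \<Sum>j\<in>UNIV. (1/2) * (fst p $ i $ l + s * snd p $ l $ j)^2)"
    for p :: "(real^'r^'m) \<times> (real^'n^'r)"
  have cvx: "convex_on pos_domain G"
  proof -
    note cd = convex_pos_domain
    have c1a: "convex_on pos_domain (\<lambda>p. - (L + s * a i l) * ln (fst p $ i $ l) + ((L - n) / 2) * (fst p $ i $ l)^2)" for i l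
    proof -
      have g: "convex_on {0<..} (\<lambda>t. - (L + s * a i l) * ln t + ((L - n) / 2) * t^2)"
        using convex_g1[OF ca[of i l], of "(L - n) / 2"] Ln by (simp add: n_def)
      show ?thesis
        by (rule convex_on_comp_lin[where l = "\<lambda>p. fst p $ i $ l", OF g cd]) (auto simp: pos_domain_def)
    qed
    have c1: "convex_on pos_domain (\<lambda>p. (\<Sum>i\<in>UNIV. \<Sum>l\<in>UNIV. - (L + s * a i l) * ln (fst p $ i $ l) + ((L - n) / 2) * (fst p $ i $ l)^2))"
      by (rule convex_on_sum_fun[OF _ cd], simp, rule convex_on_sum_fun[OF _ cd], simp, rule c1a)
    have c2a: "convex_on pos_domain (\<lambda>p. - (L + s * b l j) * ln (snd p $ l $ j) + ((L - m) / 2) * (snd p $ l $ j)^2)" for l j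
    proof -
      have g: "convex_on {0<..} (\<lambda>t. - (L + s * b l j) * ln t + ((L - m) / 2) * t^2)"
        using convex_g1[OF cb[of l j], of "(L - m) / 2"] Lm by (simp add: m_def)
      show ?thesis
        by (rule convex_on_comp_lin[where l = "\<lambda>p. snd p $ l $ j", OF g cd]) (auto simp: pos_domain_def)
    qed
    have c2: "convex_on pos_domain (\<lambda>p. (\<Sum>l\<in>UNIV. \<Sum>j\<in>UNIV. - (L + s * b l j) * ln (snd p $ l $ j) + ((L - m) / 2) * (snd p $ l $ j)^2))"
      by (rule convex_on_sum_fun[OF _ cd], simp, rule convex_on_sum_fun[OF _ cd], simp, rule c2a)
    have sq: "convex_on UNIV (\<lambda>t::real. (1/2) * t^2)"
      by (intro convex_on_cmul convex_power2) auto
    have c3: "convex_on pos_domain (\<lambda>p. (\<Sum>i\<in>UNIV. \<Sum>l\<in>UNIV. \<Sum>j\<in>UNIV. (1/2) * (fst p $ i $ l + s * snd p $ l $ j)^2))"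
      apply (rule convex_on_sum_fun[OF _ cd], simp, rule convex_on_sum_fun[OF _ cd], simp, rule convex_on_sum_fun[OF _ cd], simp)
      apply (rule convex_on_comp_lin[OF sq cd])
      by (auto simp: algebra_simps)
    show ?thesis unfolding G_def
      by (intro convex_on_add c1 c2 c3) (simp add: convex_on_const cd)
  qed
  show ?thesis
  proof (rule convex_on_cong_on[OF cvx])
    fix p :: "(real^'r^'m) \<times> (real^'n^'r)"
    assume p: "p \<in> pos_domain"
    obtain W H where pWH: "p = (W, H)" by (cases p)
    have e: "fhat X Wk Hk (W, H) = A - (\<Sum>i\<in>UNIV. \<Sum>l\<in>UNIV. a i l * ln (W $ i $ l))
        - (\<Sum>l\<in>UNIV. \<Sum>j\<in>UNIV. b l j * ln (H $ l $ j))
        + (\<Sum>i\<in>UNIV. \<Sum>l\<in>UNIV. \<Sum>j\<in>UNIV. W $ i $ l * H $ l $ j)"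
      unfolding pWH A_def a_def b_def by (rule fhat_expand[OF pk p[unfolded pWH]])
    have q: "(\<Sum>i\<in>UNIV. \<Sum>l\<in>UNIV. \<Sum>j\<in>UNIV. (1/2) * (W $ i $ l + s * H $ l $ j)^2)
      = (\<Sum>i\<in>UNIV. \<Sum>l\<in>UNIV. n * (W $ i $ l)^2 / 2)
      + s * (\<Sum>i\<in>UNIV. \<Sum>l\<in>UNIV. \<Sum>j\<in>UNIV. W $ i $ l * H $ l $ j)
      + (\<Sum>l\<in>UNIV. \<Sum>j\<in>UNIV. m * (H $ l $ j)^2 / 2)"
      using sq_sum[OF s, of W H] unfolding m_def n_def by simp
    show "G p = L * kernel_phi p + s * fhat X Wk Hk p"
    proof -
      have t1: "(\<Sum>i\<in>UNIV. \<Sum>l\<in>UNIV. - (L + s * a i l) * ln (W $ i $ l) + ((L - n) / 2) * (W $ i $ l)^2)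
          + (\<Sum>i\<in>UNIV. \<Sum>l\<in>UNIV. n * (W $ i $ l)^2 / 2)
          = L * (\<Sum>i\<in>UNIV. \<Sum>l\<in>UNIV. - ln (W $ i $ l) + (W $ i $ l)^2 / 2)
            - s * (\<Sum>i\<in>UNIV. \<Sum>l\<in>UNIV. a i l * ln (W $ i $ l))"
      proof -
        have "(\<Sum>i\<in>UNIV. \<Sum>l\<in>UNIV. - (L + s * a i l) * ln (W $ i $ l) + ((L - n) / 2) * (W $ i $ l)^2)
          + (\<Sum>i\<in>UNIV. \<Sum>l\<in>UNIV. n * (W $ i $ l)^2 / 2)
          = (\<Sum>i\<in>UNIV. \<Sum>l\<in>UNIV. (- (L + s * a i l) * ln (W $ i $ l) + ((L - n) / 2) * (W $ i $ l)^2) + n * (W $ i $ l)^2 / 2)"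
          by (simp add: sum.distrib)
        also have "\<dots> = (\<Sum>i\<in>UNIV. \<Sum>l\<in>UNIV. L * (- ln (W $ i $ l) + (W $ i $ l)^2 / 2) - s * (a i l * ln (W $ i $ l)))"
          by (intro sum.cong refl) (simp add: field_simps)
        also have "\<dots> = L * (\<Sum>i\<in>UNIV. \<Sum>l\<in>UNIV. - ln (W $ i $ l) + (W $ i $ l)^2 / 2)
            - s * (\<Sum>i\<in>UNIV. \<Sum>l\<in>UNIV. a i l * ln (W $ i $ l))"
          by (simp only: sum_distrib_left sum_subtractf)
        finally show ?thesis .
      qed
      have t2: "(\<Sum>l\<in>UNIV. \<Sum>j\<in>UNIV. - (L + s * b l j) * ln (H $ l $ j) + ((L - m) / 2) * (H $ l $ j)^2)
          + (\<Sum>l\<in>UNIV. \<Sum>j\<in>UNIV. m * (H $ l $ j)^2 / 2)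
          = L * (\<Sum>l\<in>UNIV. \<Sum>j\<in>UNIV. - ln (H $ l $ j) + (H $ l $ j)^2 / 2)
            - s * (\<Sum>l\<in>UNIV. \<Sum>j\<in>UNIV. b l j * ln (H $ l $ j))"
      proof -
        have "(\<Sum>l\<in>UNIV. \<Sum>j\<in>UNIV. - (L + s * b l j) * ln (H $ l $ j) + ((L - m) / 2) * (H $ l $ j)^2)
          + (\<Sum>l\<in>UNIV. \<Sum>j\<in>UNIV. m * (H $ l $ j)^2 / 2)
          = (\<Sum>l\<in>UNIV. \<Sum>j\<in>UNIV. (- (L + s * b l j) * ln (H $ l $ j) + ((L - m) / 2) * (H $ l $ j)^2) + m * (H $ l $ j)^2 / 2)"
          by (simp add: sum.distrib)
        also have "\<dots> = (\<Sum>l\<in>UNIV. \<Sum>j\<in>UNIV. L * (- ln (H $ l $ j) + (H $ l $ j)^2 / 2) - s * (b l j * ln (H $ l $ j)))"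
          by (intro sum.cong refl) (simp add: field_simps)
        also have "\<dots> = L * (\<Sum>l\<in>UNIV. \<Sum>j\<in>UNIV. - ln (H $ l $ j) + (H $ l $ j)^2 / 2)
            - s * (\<Sum>l\<in>UNIV. \<Sum>j\<in>UNIV. b l j * ln (H $ l $ j))"
          by (simp only: sum_distrib_left sum_subtractf)
        finally show ?thesis .
      qed
      show ?thesis
        unfolding e G_def pWH fst_conv snd_conv q kernel_phi_def prod.case
        using t1 t2 by (simp only: distrib_left right_diff_distrib)
    qed
  qed
qed


lemma alpha_le1:
  assumes "(Wk, Hk) \<in> pos_domain"
  shows "alpha Wk Hk i l j \<le> 1"
proof -
  have "Wk $ i $ l * Hk $ l $ j \<le> (\<Sum>l'\<in>UNIV. Wk $ i $ l' * Hk $ l' $ j)"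
    using assms by (intro member_le_sum) (auto simp: pos_domain_def less_imp_le)
  moreover have "0 < (\<Sum>l'\<in>UNIV. Wk $ i $ l' * Hk $ l' $ j)"
    using assms by (intro sum_pos) (auto simp: pos_domain_def)
  ultimately show ?thesis by (simp add: alpha_def)
qed

lemma smad_from:
  fixes X :: "real^'n^'m" and Wk :: "real^'r^'m" and Hk :: "real^'n^'r" and L :: real
  assumes pk: "(Wk, Hk) \<in> pos_domain" and Xn: "\<forall>i j. 0 \<le> X $ i $ j"
    and La: "\<And>i l. (\<Sum>j\<in>UNIV. alpha Wk Hk i l j * X $ i $ j) \<le> L"
    and Lb: "\<And>l j. (\<Sum>i\<in>UNIV. alpha Wk Hk i l j * X $ i $ j) \<le> L"
    and Lm: "real CARD('m) \<le> L" and Ln: "real CARD('n) \<le> L"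
  shows "smad L (fhat X Wk Hk) kernel_phi pos_domain"
proof -
  have "convex_on pos_domain (\<lambda>x. L * kernel_phi x + (-1) * fhat X Wk Hk x)"
    by (rule main_convex[OF pk Xn _ La Lb Lm Ln]) simp
  then have 1: "convex_on pos_domain (\<lambda>x. L * kernel_phi x - fhat X Wk Hk x)"
    by (rule convex_on_cong_on) simp
  have 2: "convex_on pos_domain (\<lambda>x. L * kernel_phi x + 1 * fhat X Wk Hk x)"
    by (rule main_convex[OF pk Xn _ La Lb Lm Ln]) simp
  show ?thesis unfolding smad_def using 1 2 by simp
qed

theorem mainTheorem6:
  fixes X :: "real^'n^'m"
    and Wk :: "real^'r^'m" and Hk :: "real^'n^'r"
    and Lk :: real
  assumes X_nonneg: "\<forall>i j. 0 \<le> X $ i $ j"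
  shows "((Wk, Hk) \<in> pos_domain \<and> 0 < Lk \<and>
          Lk \<ge> max (max (Max ((\<lambda>(i, l). \<Sum>j\<in>UNIV. alpha Wk Hk i l j * X $ i $ j) ` UNIV))
                         (Max ((\<lambda>(l, j). \<Sum>i\<in>UNIV. alpha Wk Hk i l j * X $ i $ j) ` UNIV)))
                    (max (real CARD('m)) (real CARD('n)))
           \<longrightarrow> smad Lk (fhat X Wk Hk) kernel_phi pos_domain)
       \<and> (\<forall>L. L \<ge> max (max (Max ((\<lambda>i. \<Sum>j\<in>UNIV. X $ i $ j) ` UNIV))
                              (Max ((\<lambda>j. \<Sum>i\<in>UNIV. X $ i $ j) ` UNIV)))
                         (max (real CARD('m)) (real CARD('n)))
            \<longrightarrow> (\<forall>Wk' :: real^'r^'m. \<forall>Hk' :: real^'n^'r. (Wk', Hk') \<in> pos_domain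
                   \<longrightarrow> smad L (fhat X Wk' Hk') kernel_phi pos_domain))"
proof (intro conjI impI allI)
  assume h: "(Wk, Hk) \<in> pos_domain \<and> 0 < Lk \<and>
          Lk \<ge> max (max (Max ((\<lambda>(i, l). \<Sum>j\<in>UNIV. alpha Wk Hk i l j * X $ i $ j) ` UNIV))
                         (Max ((\<lambda>(l, j). \<Sum>i\<in>UNIV. alpha Wk Hk i l j * X $ i $ j) ` UNIV)))
                    (max (real CARD('m)) (real CARD('n)))"
  have La: "(\<Sum>j\<in>UNIV. alpha Wk Hk i l j * X $ i $ j) \<le> Lk" for i l
  proof -
    have "(\<Sum>j\<in>UNIV. alpha Wk Hk i l j * X $ i $ j) \<le> Max ((\<lambda>(i, l). \<Sum>j\<in>UNIV. alpha Wk Hk i l j * X $ i $ j) ` UNIV)"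
      by (rule Max_ge) (auto intro: image_eqI[where x = "(i, l)"])
    then show ?thesis using h by linarith
  qed
  have Lb: "(\<Sum>i\<in>UNIV. alpha Wk Hk i l j * X $ i $ j) \<le> Lk" for l j
  proof -
    have "(\<Sum>i\<in>UNIV. alpha Wk Hk i l j * X $ i $ j) \<le> Max ((\<lambda>(l, j). \<Sum>i\<in>UNIV. alpha Wk Hk i l j * X $ i $ j) ` UNIV)"
      by (rule Max_ge) (auto intro: image_eqI[where x = "(l, j)"])
    then show ?thesis using h by linarith
  qed
  show "smad Lk (fhat X Wk Hk) kernel_phi pos_domain"
    by (rule smad_from[OF _ X_nonneg La Lb]) (use h in auto)
next
  fix L :: real and Wk' :: "real^'r^'m" and Hk' :: "real^'n^'r"
  assume h: "L \<ge> max (max (Max ((\<lambda>i. \<Sum>j\<in>UNIV. X $ i $ j) ` UNIV))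
                              (Max ((\<lambda>j. \<Sum>i\<in>UNIV. X $ i $ j) ` UNIV)))
                         (max (real CARD('m)) (real CARD('n)))"
    and pk: "(Wk', Hk') \<in> pos_domain"
  have La: "(\<Sum>j\<in>UNIV. alpha Wk' Hk' i l j * X $ i $ j) \<le> L" for i l
  proof -
    have "(\<Sum>j\<in>UNIV. alpha Wk' Hk' i l j * X $ i $ j) \<le> (\<Sum>j\<in>UNIV. X $ i $ j)"
      using alpha_le1[OF pk] X_nonneg by (intro sum_mono) (simp add: mult_left_le_one_le alpha_pos[OF pk] less_imp_le)
    also have "\<dots> \<le> Max ((\<lambda>i. \<Sum>j\<in>UNIV. X $ i $ j) ` UNIV)"
      by (rule Max_ge) auto
    finally show ?thesis using h by linarith
  qed
  have Lb: "(\<Sum>i\<in>UNIV. alpha Wk' Hk' i l j * X $ i $ j) \<le> L" for l j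
  proof -
    have "(\<Sum>i\<in>UNIV. alpha Wk' Hk' i l j * X $ i $ j) \<le> (\<Sum>i\<in>UNIV. X $ i $ j)"
      using alpha_le1[OF pk] X_nonneg by (intro sum_mono) (simp add: mult_left_le_one_le alpha_pos[OF pk] less_imp_le)
    also have "\<dots> \<le> Max ((\<lambda>j. \<Sum>i\<in>UNIV. X $ i $ j) ` UNIV)"
      by (rule Max_ge) auto
    finally show ?thesis using h by linarith
  qed
  show "smad L (fhat X Wk' Hk') kernel_phi pos_domain"
    by (rule smad_from[OF pk X_nonneg La Lb]) (use h in auto)
qed

end
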